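(* Let $A\in\mathbb{R}^{n\times n}$ be symmetric positive semidefinite and $b\in\mathbb{R}^n$. Apply the $CD$ method (described in the context) to $Ay=b$ with starting point $y_0\in\mathbb{R}^n$ and real parameters $\gamma_i\neq0$, and assume it runs without breakdown (all denominators nonzero) and produces $y_0,\dots,y_{m+1}$, $r_0,\dots,r_m$ (all nonzero) and $p_0,\dots,p_m$, with $m+1\le n$ and $Ay_{m+1}=b$. Let $y^\ast$ be any solution of $Ay=b$, let $f(y)=\tfrac12(y-y^\ast)^TA(y-y^\ast)$, and for $i\in\{1,\dots,m\}$ let $g_i(y)=\tfrac12(y-y_i)^TA(y-y_i)$. Then: (1) the minimum of $g_1$ over the line $\{y_1+\gamma_0Ap_0+tp_0:\ t\in\mathbb{R}\}$ is attained at $t=-\sigma_0$; (2) for each $i=2,\dots,m$, the minimum of $g_i$ over the two-dimensional affine set $\{y_i+\gamma_{i-1}Ap_{i-1}+sp_{i-1}+tp_{i-2}:\ s,t\in\mathbb{R}\}$ is attained at $(s,t)=(-\sigma_{i-1},-\omega_{i-1})$; (3) for $i=1,\dots,m$, $$f(y_i+a_ip_i)=f(y_i)-\frac12\left(\frac{\gamma_{i-1}}{a_{i-1}}\right)^2\frac{\|r_i\|^4}{p_i^TAp_i};$$ (4) with $A^+$ the Moore–Penrose pseudoinverse of $A$, $$\left[A^+-\sum_{i=0}^m\frac{p_ip_i^T}{p_i^TAp_i}\right]r_0=0.$$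
   Context: The $CD$ method for solving $Ay=b$, with starting point $y_0\in\mathbb{R}^n$ and nonzero real parameters $\gamma_0,\gamma_1,\dots$, is the following iteration (all norms Euclidean). Set $r_0=b-Ay_0$; if $r_0=0$ stop; set $p_0=r_0$. For $k=0,1,2,\dots$: compute $a_k=\dfrac{r_k^Tp_k}{p_k^TAp_k}$, $y_{k+1}=y_k+a_kp_k$, $r_{k+1}=r_k-a_kAp_k$; if $r_{k+1}=0$ stop; otherwise set $\sigma_k=\gamma_k\dfrac{\|Ap_k\|^2}{p_k^TAp_k}$ and, if $k=0$, $p_1=\gamma_0Ap_0-\sigma_0p_0$, while if $k\ge1$, $\omega_k=\gamma_k\dfrac{(Ap_k)^T(Ap_{k-1})}{p_{k-1}^TAp_{k-1}}$ and $p_{k+1}=\gamma_kAp_k-\sigma_kp_k-\omega_kp_{k-1}$. *)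

theory Defs
  imports "HOL-Analysis.Analysis"
begin

definition sym_psd :: "real^'n^'n \<Rightarrow> bool" where
  "sym_psd A \<longleftrightarrow> transpose A = A \<and> (\<forall>x. 0 \<le> x \<bullet> (A *v x))"

definition outer_prod :: "real^'n \<Rightarrow> real^'n \<Rightarrow> real^'n^'n" where
  "outer_prod u v = (\<chi> i j. u $ i * v $ j)"

definition is_moore_penrose :: "real^'n^'n \<Rightarrow> real^'n^'n \<Rightarrow> bool" where
  "is_moore_penrose A X \<longleftrightarrow>
     A ** X ** A = A \<and> X ** A ** X = X \<and>
     transpose (A ** X) = A ** X \<and> transpose (X ** A) = X ** A"

definition cd_a :: "real^'n^'n \<Rightarrow> (nat \<Rightarrow> real^'n) \<Rightarrow> (nat \<Rightarrow> real^'n) \<Rightarrow> nat \<Rightarrow> real" where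
  "cd_a A r p k = (r k \<bullet> p k) / (p k \<bullet> (A *v p k))"

definition cd_sigma :: "real^'n^'n \<Rightarrow> (nat \<Rightarrow> real^'n) \<Rightarrow> (nat \<Rightarrow> real) \<Rightarrow> nat \<Rightarrow> real" where
  "cd_sigma A p \<gamma> k = \<gamma> k * (norm (A *v p k))^2 / (p k \<bullet> (A *v p k))"

definition cd_omega :: "real^'n^'n \<Rightarrow> (nat \<Rightarrow> real^'n) \<Rightarrow> (nat \<Rightarrow> real) \<Rightarrow> nat \<Rightarrow> real" where
  "cd_omega A p \<gamma> k =
     \<gamma> k * ((A *v p k) \<bullet> (A *v p (k - 1))) / (p (k - 1) \<bullet> (A *v p (k - 1)))"

definition energy :: "real^'n^'n \<Rightarrow> real^'n \<Rightarrow> real^'n \<Rightarrow> real" where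
  "energy A c y = 1/2 * ((y - c) \<bullet> (A *v (y - c)))"

end

theory Submission
  imports Defs
begin


lemma sym_inner:
  assumes "transpose A = A"
  shows "x \<bullet> ((A::real^'n^'n) *v y) = y \<bullet> (A *v x)"
proof -
  have "x \<bullet> (A *v y) = (x v* A) \<bullet> y" by (simp add: dot_lmul_matrix)
  also have "x v* A = A *v x" by (metis assms transpose_matrix_vector)
  finally show ?thesis by (simp add: inner_commute)
qed

lemma energy_add:
  assumes "transpose A = A"
  shows "energy A c (x + v) = energy A c x + v \<bullet> ((A::real^'n^'n) *v (x - c)) + 1/2 * (v \<bullet> (A *v v))"
proof -
  have e: "x + v - c = (x - c) + v" by simp
  show ?thesis unfolding energy_def e using sym_inner[OF assms, of "x-c" v]
    by (simp add: matrix_vector_right_distrib inner_add_left inner_add_right algebra_simps)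
qed

lemma energy_min:
  assumes "sym_psd A" "v \<bullet> ((A::real^'n^'n) *v (x - c)) = 0"
  shows "energy A c x \<le> energy A c (x + v)"
  using assms energy_add[of A c x v] unfolding sym_psd_def by auto

lemma scale_inv:
  fixes x y :: "real^'n"
  assumes "c \<noteq> 0" "c *\<^sub>R x = y" shows "x = (1/c) *\<^sub>R y"
  using assms by auto

lemma orth_span:
  fixes v x :: "real^'n"
  assumes "x \<in> span S" "\<And>z. z \<in> S \<Longrightarrow> v \<bullet> z = 0"
  shows "v \<bullet> x = 0"
  using orthogonal_to_span[OF assms(1), of v] assms(2) by (simp add: orthogonal_def)

lemma outer_mult: "outer_prod u v *v (x::real^'n) = (v \<bullet> x) *\<^sub>R u"
  by (simp add: outer_prod_def matrix_vector_mult_def vec_eq_iff inner_vec_def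
      sum_distrib_left mult_ac)

lemma sum_mat_mult:
  fixes M :: "nat \<Rightarrow> real^'n^'n"
  shows "(\<Sum>i\<in>S. M i) *v x = (\<Sum>i\<in>S. M i *v x)"
proof (induction S rule: infinite_finite_induct)
  case (insert i S) then show ?case by (simp add: matrix_vector_mult_add_rdistrib)
qed simp_all

lemma mat_mult_sum:
  fixes A :: "real^'n^'n"
  shows "A *v (\<Sum>i\<in>S. f i) = (\<Sum>i\<in>S. A *v f i)"
proof (induction S rule: infinite_finite_induct)
  case (insert i S) then show ?case by (simp add: matrix_vector_right_distrib)
qed simp_all

lemma penrose_fix:
  fixes A X :: "real^'n^'n"
  assumes "is_moore_penrose A X" "transpose A = A"
  shows "X *v (A *v (A *v w)) = A *v w"
proof -
  have XA: "X ** A = A ** transpose X"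
    using assms unfolding is_moore_penrose_def by (metis matrix_transpose_mul)
  have AXA: "A ** transpose X ** A = A"
    using assms unfolding is_moore_penrose_def
    by (metis matrix_transpose_mul matrix_mul_assoc)
  have "X *v (A *v (A *v w)) = (X ** A) *v (A *v w)" by (rule matrix_vector_mul_assoc)
  also have "\<dots> = (A ** transpose X ** A) *v w" by (simp add: XA matrix_vector_mul_assoc matrix_mul_assoc)
  finally show ?thesis using AXA by simp
qed

theorem theorem3:
  fixes A :: "real^'n^'n" and b :: "real^'n"
    and y r p :: "nat \<Rightarrow> real^'n" and \<gamma> :: "nat \<Rightarrow> real" and m :: nat
    and ystar :: "real^'n"
  assumes psd: "sym_psd A"
    and gamma_nz: "\<forall>k. \<gamma> k \<noteq> 0"
    and r0: "r 0 = b - A *v y 0"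
    and p0: "p 0 = r 0"
    and ystep: "\<forall>k\<le>m. y (Suc k) = y k + cd_a A r p k *\<^sub>R p k"
    and rstep: "\<forall>k\<le>m. r (Suc k) = r k - cd_a A r p k *\<^sub>R (A *v p k)"
    and p1: "1 \<le> m \<longrightarrow> p 1 = \<gamma> 0 *\<^sub>R (A *v p 0) - cd_sigma A p \<gamma> 0 *\<^sub>R p 0"
    and pstep: "\<forall>k. 1 \<le> k \<and> k < m \<longrightarrow>
        p (Suc k) = \<gamma> k *\<^sub>R (A *v p k) - cd_sigma A p \<gamma> k *\<^sub>R p k
                    - cd_omega A p \<gamma> k *\<^sub>R p (k - 1)"
    and r_nz: "\<forall>k\<le>m. r k \<noteq> 0"
    and den_nz: "\<forall>k\<le>m. p k \<bullet> (A *v p k) \<noteq> 0"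
    and dim: "m + 1 \<le> CARD('n)"
    and final: "A *v y (Suc m) = b"
    and ystar: "A *v ystar = b"
  shows
    "(1 \<le> m \<longrightarrow>
        (\<forall>t. energy A (y 1) (y 1 + \<gamma> 0 *\<^sub>R (A *v p 0) + (- cd_sigma A p \<gamma> 0) *\<^sub>R p 0)
              \<le> energy A (y 1) (y 1 + \<gamma> 0 *\<^sub>R (A *v p 0) + t *\<^sub>R p 0)))
     \<and> (\<forall>i. 2 \<le> i \<and> i \<le> m \<longrightarrow>
        (\<forall>s t. energy A (y i) (y i + \<gamma> (i - 1) *\<^sub>R (A *v p (i - 1))
                 + (- cd_sigma A p \<gamma> (i - 1)) *\<^sub>R p (i - 1)
                 + (- cd_omega A p \<gamma> (i - 1)) *\<^sub>R p (i - 2))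
              \<le> energy A (y i) (y i + \<gamma> (i - 1) *\<^sub>R (A *v p (i - 1))
                 + s *\<^sub>R p (i - 1) + t *\<^sub>R p (i - 2))))
     \<and> (\<forall>i. 1 \<le> i \<and> i \<le> m \<longrightarrow>
        energy A ystar (y i + cd_a A r p i *\<^sub>R p i)
          = energy A ystar (y i)
            - 1/2 * (\<gamma> (i - 1) / cd_a A r p (i - 1))^2 * (norm (r i))^4
                  / (p i \<bullet> (A *v p i)))
     \<and> (\<forall>X. is_moore_penrose A X \<longrightarrow>
        (X - (\<Sum>i\<le>m. (1 / (p i \<bullet> (A *v p i))) *\<^sub>R outer_prod (p i) (p i))) *v r 0 = 0)"
  proof -
  have sym: "transpose A = A" using psd by (simp add: sym_psd_def)
  note S = sym_inner[OF sym]
  define d where "d k = p k \<bullet> (A *v p k)" for k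
  have dnz: "k \<le> m \<Longrightarrow> d k \<noteq> 0" for k using den_nz d_def by auto
  have aeq: "cd_a A r p k = (r k \<bullet> p k) / d k" for k by (simp add: cd_a_def d_def)
  have sig: "cd_sigma A p \<gamma> k * d k = \<gamma> k * ((A *v p k) \<bullet> (A *v p k))" if "k \<le> m" for k
    using dnz[OF that] by (simp add: cd_sigma_def d_def power2_norm_eq_inner)
  have ome: "cd_omega A p \<gamma> k * d (k - 1) = \<gamma> k * ((A *v p k) \<bullet> (A *v p (k - 1)))"
    if "k - 1 \<le> m" for k
    using dnz[OF that] by (simp add: cd_omega_def d_def)
  have Apspan: "A *v p j \<in> span (p ` {..Suc j})" if "j < m" for j
  proof (cases j)
    case 0
    have "\<gamma> 0 *\<^sub>R (A *v p 0) = p 1 + cd_sigma A p \<gamma> 0 *\<^sub>R p 0" using p1 that 0 by simp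
    hence "A *v p 0 = (1/\<gamma> 0) *\<^sub>R (p 1 + cd_sigma A p \<gamma> 0 *\<^sub>R p 0)"
      using gamma_nz scale_inv by blast
    moreover have "p 1 \<in> span (p ` {..Suc 0})" "p 0 \<in> span (p ` {..Suc 0})"
      by (auto intro!: span_base)
    ultimately show ?thesis using 0 by (simp add: span_add span_mul)
  next
    case (Suc i)
    have "\<gamma> j *\<^sub>R (A *v p j) = p (Suc j) + cd_sigma A p \<gamma> j *\<^sub>R p j + cd_omega A p \<gamma> j *\<^sub>R p (j - 1)"
      using pstep that Suc by simp
    hence "A *v p j = (1/\<gamma> j) *\<^sub>R (p (Suc j) + cd_sigma A p \<gamma> j *\<^sub>R p j + cd_omega A p \<gamma> j *\<^sub>R p (j - 1))"
      using gamma_nz scale_inv by blast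
    moreover have "p (Suc j) \<in> span (p ` {..Suc j})" "p j \<in> span (p ` {..Suc j})"
       "p (j - 1) \<in> span (p ` {..Suc j})"
      by (auto intro!: span_base)
    ultimately show ?thesis by (simp add: span_add span_mul)
  qed
  have conj: "k \<le> m \<Longrightarrow> j < k \<Longrightarrow> p j \<bullet> (A *v p k) = 0" for k j
  proof (induction k arbitrary: j rule: less_induct)
    case (less k)
    then obtain k' where k: "k = Suc k'" by (cases k) auto
    have IH: "\<And>i l. i \<le> k' \<Longrightarrow> l < i \<Longrightarrow> p l \<bullet> (A *v p i) = 0"
      using less k by auto
    show ?case
    proof (cases "k' = 0")
      case True
      hence j0: "j = 0" "k = 1" using less k by auto
      have "p 1 = \<gamma> 0 *\<^sub>R (A *v p 0) - cd_sigma A p \<gamma> 0 *\<^sub>R p 0" using p1 less j0 by simp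
      hence "p 0 \<bullet> (A *v p 1) = \<gamma> 0 * (p 0 \<bullet> (A *v (A *v p 0))) - cd_sigma A p \<gamma> 0 * d 0"
        unfolding d_def by (subst \<open>p 1 = _\<close>) (simp add: algebra_simps inner_diff_right)
      also have "p 0 \<bullet> (A *v (A *v p 0)) = (A *v p 0) \<bullet> (A *v p 0)" using S by metis
      finally show ?thesis using sig[of 0] less j0 by simp
    next
      case False
      have km: "1 \<le> k'" "k' < m" using False less k by auto
      have pk: "p k = \<gamma> k' *\<^sub>R (A *v p k') - cd_sigma A p \<gamma> k' *\<^sub>R p k'
                    - cd_omega A p \<gamma> k' *\<^sub>R p (k' - 1)" using pstep km k by simp
      have exp: "p j \<bullet> (A *v p k) = \<gamma> k' * ((A *v p k') \<bullet> (A *v p j))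
          - cd_sigma A p \<gamma> k' * (p j \<bullet> (A *v p k')) - cd_omega A p \<gamma> k' * (p j \<bullet> (A *v p (k' - 1)))"
        using S[of "p j" "A *v p k'"]
        by (subst pk) (simp add: algebra_simps inner_diff_right)
      consider "j = k'" | "j = k' - 1" | "j < k' - 1" using less k km by linarith
      then show ?thesis
      proof cases
        case 1
        have "p k' \<bullet> (A *v p (k' - 1)) = 0" using IH[of k' "k'-1"] S[of "p k'" "p (k'-1)"] km by simp
        then show ?thesis using exp 1 sig[of k'] km by (simp add: d_def)
      next
        case 2
        have "p (k'-1) \<bullet> (A *v p k') = 0" using IH[of k' "k'-1"] km by simp
        moreover have "(A *v p k') \<bullet> (A *v p (k' - 1)) = (A *v p (k' - 1)) \<bullet> (A *v p k')"
          by (simp add: inner_commute)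
        ultimately show ?thesis using exp 2 ome[of k'] km by (simp add: d_def)
      next
        case 3
        have "(A *v p k') \<bullet> (A *v p j) = 0"
        proof (rule orth_span[OF Apspan])
          show "j < m" using 3 km by simp
          fix z assume "z \<in> p ` {..Suc j}"
          then obtain l where l: "l \<le> Suc j" "z = p l" by auto
          have "p l \<bullet> (A *v p k') = 0" using IH[of k' l] l 3 by simp
          then show "(A *v p k') \<bullet> z = 0" using l by (simp add: inner_commute)
        qed
        moreover have "p j \<bullet> (A *v p k') = 0" using IH[of k' j] 3 by simp
        moreover have "p j \<bullet> (A *v p (k' - 1)) = 0" using IH[of "k'-1" j] 3 by simp
        ultimately show ?thesis using exp by simp
      qed
    qed
  qed
  have conj2: "j \<le> m \<Longrightarrow> k \<le> m \<Longrightarrow> j \<noteq> k \<Longrightarrow> p j \<bullet> (A *v p k) = 0" for j k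
    using conj S by (metis linorder_neqE_nat)
  have resid: "k \<le> Suc m \<Longrightarrow> r k = b - A *v y k" for k
  proof (induction k)
    case 0 then show ?case using r0 by simp
  next
    case (Suc k)
    then have "k \<le> m" by simp
    then have "r (Suc k) = r k - cd_a A r p k *\<^sub>R (A *v p k)"
      "y (Suc k) = y k + cd_a A r p k *\<^sub>R p k" using ystep rstep by auto
    then show ?case using Suc
      by (simp add: matrix_vector_right_distrib matrix_vector_mult_scaleR)
  qed
  have orth: "k \<le> Suc m \<Longrightarrow> j < k \<Longrightarrow> r k \<bullet> p j = 0" for k j
  proof (induction k arbitrary: j)
    case 0 then show ?case by simp
  next
    case (Suc k)
    then have km: "k \<le> m" by simp
    have eq: "r (Suc k) \<bullet> p j = r k \<bullet> p j - cd_a A r p k * ((A *v p k) \<bullet> p j)"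
      using rstep km by (simp add: inner_diff_left)
    show ?case
    proof (cases "j = k")
      case True
      then show ?thesis using eq dnz[OF km] by (simp add: aeq d_def inner_commute)
    next
      case False
      then have "j < k" using Suc by simp
      then show ?thesis using eq Suc.IH km conj[of k j] by (simp add: inner_commute)
    qed
  qed
  have rp0: "k \<le> m \<Longrightarrow> j \<le> k \<Longrightarrow> r j \<bullet> p k = r 0 \<bullet> p k" for k j
  proof (induction j)
    case 0 then show ?case by simp
  next
    case (Suc j)
    have "r (Suc j) \<bullet> p k = r j \<bullet> p k - cd_a A r p j * ((A *v p j) \<bullet> p k)"
      using rstep Suc by (simp add: inner_diff_left)
    moreover have "(A *v p j) \<bullet> p k = 0" using conj[of k j] S[of "p k" "p j"] Suc by (simp add: inner_commute)
    ultimately show ?case using Suc by simp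
  qed
  have rspan: "k \<le> m \<Longrightarrow> r k \<in> span (p ` {..k})" for k
  proof (induction k)
    case 0 then show ?case using p0 by (auto intro!: span_base)
  next
    case (Suc k)
    have "span (p ` {..k}) \<subseteq> span (p ` {..Suc k})" by (rule span_mono) auto
    then have "r k \<in> span (p ` {..Suc k})" using Suc by auto
    moreover have "A *v p k \<in> span (p ` {..Suc k})" using Apspan Suc by simp
    ultimately show ?case using rstep Suc by (simp add: span_diff span_mul)
  qed
  have rr: "1 \<le> i \<Longrightarrow> i \<le> m \<Longrightarrow> r i \<bullet> r (i - 1) = 0" for i
  proof -
    assume i: "1 \<le> i" "i \<le> m"
    show ?thesis
    proof (rule orth_span[OF rspan[of "i - 1"]])
      show "i - 1 \<le> m" using i by simp
      fix z assume "z \<in> p ` {..i - 1}"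
      then obtain l where "l \<le> i - 1" "z = p l" by auto
      then show "r i \<bullet> z = 0" using orth[of i l] i by simp
    qed
  qed
  have K: "(r i \<bullet> p i) * cd_a A r p (i - 1) = - \<gamma> (i - 1) * (r i \<bullet> r i)"
    if i: "1 \<le> i" "i \<le> m" for i
  proof -
    obtain k where k: "i = Suc k" using i by (cases i) auto
    have km: "k < m" using i k by simp
    have rpi: "r i \<bullet> p i = \<gamma> k * (r i \<bullet> (A *v p k))"
    proof (cases "k = 0")
      case True
      have "p i = \<gamma> 0 *\<^sub>R (A *v p 0) - cd_sigma A p \<gamma> 0 *\<^sub>R p 0" using p1 i k True by simp
      then show ?thesis using orth[of i 0] i k True by (simp add: inner_diff_right)
    next
      case False
      have "p i = \<gamma> k *\<^sub>R (A *v p k) - cd_sigma A p \<gamma> k *\<^sub>R p k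
                    - cd_omega A p \<gamma> k *\<^sub>R p (k - 1)" using pstep km k False by simp
      then show ?thesis using orth[of i k] orth[of i "k-1"] i k by (simp add: inner_diff_right)
    qed
    have "cd_a A r p k *\<^sub>R (A *v p k) = r k - r i" using rstep km k by simp
    then have "cd_a A r p k * (r i \<bullet> (A *v p k)) = r i \<bullet> r k - r i \<bullet> r i"
      by (metis inner_diff_right inner_scaleR_right)
    then have "cd_a A r p k * (r i \<bullet> (A *v p k)) = - (r i \<bullet> r i)"
      using rr[OF i] k by (simp add: inner_commute)
    then show ?thesis using rpi k by (simp add: algebra_simps)
  qed
  have anz: "k \<le> m \<Longrightarrow> cd_a A r p k \<noteq> 0" for k
  proof (induction k)
    case 0 then show ?case using dnz[of 0] r_nz p0 by (simp add: aeq)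
  next
    case (Suc k)
    have "(r (Suc k) \<bullet> p (Suc k)) * cd_a A r p k = - \<gamma> k * (r (Suc k) \<bullet> r (Suc k))"
      using K[of "Suc k"] Suc by simp
    moreover have "r (Suc k) \<bullet> r (Suc k) \<noteq> 0" using r_nz Suc by simp
    ultimately have "r (Suc k) \<bullet> p (Suc k) \<noteq> 0" using gamma_nz by auto
    then show ?case using dnz[of "Suc k"] Suc by (simp add: aeq)
  qed
  have C1: "1 \<le> m \<longrightarrow>
        (\<forall>t. energy A (y 1) (y 1 + \<gamma> 0 *\<^sub>R (A *v p 0) + (- cd_sigma A p \<gamma> 0) *\<^sub>R p 0)
              \<le> energy A (y 1) (y 1 + \<gamma> 0 *\<^sub>R (A *v p 0) + t *\<^sub>R p 0))"
  proof (intro impI allI)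
    fix t assume m1: "1 \<le> m"
    let ?x = "y 1 + \<gamma> 0 *\<^sub>R (A *v p 0) + (- cd_sigma A p \<gamma> 0) *\<^sub>R p 0"
    let ?v = "(t + cd_sigma A p \<gamma> 0) *\<^sub>R p 0"
    have xc: "?x - y 1 = p 1" using p1 m1 by simp
    have "?v \<bullet> (A *v (?x - y 1)) = 0" unfolding xc using conj[of 1 0] m1 by simp
    then have "energy A (y 1) ?x \<le> energy A (y 1) (?x + ?v)" by (rule energy_min[OF psd])
    moreover have "?x + ?v = y 1 + \<gamma> 0 *\<^sub>R (A *v p 0) + t *\<^sub>R p 0"
      by (simp add: algebra_simps)
    ultimately show "energy A (y 1) ?x \<le> energy A (y 1) (y 1 + \<gamma> 0 *\<^sub>R (A *v p 0) + t *\<^sub>R p 0)"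
      by metis
  qed
  have C2: "\<forall>i. 2 \<le> i \<and> i \<le> m \<longrightarrow>
        (\<forall>s t. energy A (y i) (y i + \<gamma> (i - 1) *\<^sub>R (A *v p (i - 1))
                 + (- cd_sigma A p \<gamma> (i - 1)) *\<^sub>R p (i - 1)
                 + (- cd_omega A p \<gamma> (i - 1)) *\<^sub>R p (i - 2))
              \<le> energy A (y i) (y i + \<gamma> (i - 1) *\<^sub>R (A *v p (i - 1))
                 + s *\<^sub>R p (i - 1) + t *\<^sub>R p (i - 2)))"
  proof (intro allI impI)
    fix i s t assume i: "2 \<le> i \<and> i \<le> m"
    let ?x = "y i + \<gamma> (i - 1) *\<^sub>R (A *v p (i - 1))
                 + (- cd_sigma A p \<gamma> (i - 1)) *\<^sub>R p (i - 1)
                 + (- cd_omega A p \<gamma> (i - 1)) *\<^sub>R p (i - 2)"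
    let ?v = "(s + cd_sigma A p \<gamma> (i - 1)) *\<^sub>R p (i - 1) + (t + cd_omega A p \<gamma> (i - 1)) *\<^sub>R p (i - 2)"
    have i2: "i - 1 - 1 = i - 2" by simp
    have "p (Suc (i - 1)) = \<gamma> (i - 1) *\<^sub>R (A *v p (i - 1)) - cd_sigma A p \<gamma> (i - 1) *\<^sub>R p (i - 1)
                    - cd_omega A p \<gamma> (i - 1) *\<^sub>R p (i - 1 - 1)" 
      using spec[OF pstep, of "i - 1"] i by linarith
    then have xc: "?x - y i = p i" using i i2 by (simp add: algebra_simps)
    have "?v \<bullet> (A *v (?x - y i)) = 0" unfolding xc
      using conj[of i "i - 1"] conj[of i "i - 2"] i by (simp add: inner_add_left)
    then have "energy A (y i) ?x \<le> energy A (y i) (?x + ?v)" by (rule energy_min[OF psd])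
    moreover have "?x + ?v = y i + \<gamma> (i - 1) *\<^sub>R (A *v p (i - 1))
                 + s *\<^sub>R p (i - 1) + t *\<^sub>R p (i - 2)"
      by (simp add: algebra_simps)
    ultimately show "energy A (y i) ?x \<le> energy A (y i) (y i + \<gamma> (i - 1) *\<^sub>R (A *v p (i - 1))
                 + s *\<^sub>R p (i - 1) + t *\<^sub>R p (i - 2))"
      by metis
  qed
  have C3: "\<forall>i. 1 \<le> i \<and> i \<le> m \<longrightarrow>
        energy A ystar (y i + cd_a A r p i *\<^sub>R p i)
          = energy A ystar (y i)
            - 1/2 * (\<gamma> (i - 1) / cd_a A r p (i - 1))^2 * (norm (r i))^4
                  / (p i \<bullet> (A *v p i))"
  proof (intro allI impI)
    fix i assume i: "1 \<le> i \<and> i \<le> m"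
    define a where "a = cd_a A r p i"
    define a' where "a' = cd_a A r p (i - 1)"
    define q where "q = r i \<bullet> p i"
    define rr2 where "rr2 = r i \<bullet> r i"
    have dn: "d i \<noteq> 0" using dnz i by simp
    have "i - 1 \<le> m" using i by arith
    then have a'nz: "a' \<noteq> 0" unfolding a'_def by (rule anz)
    have Ae: "A *v (y i - ystar) = - r i" using resid[of i] i ystar
      by (simp add: matrix_vector_mult_diff_distrib)
    have "energy A ystar (y i + a *\<^sub>R p i) = energy A ystar (y i) + (a *\<^sub>R p i) \<bullet> (A *v (y i - ystar))
          + 1/2 * ((a *\<^sub>R p i) \<bullet> (A *v (a *\<^sub>R p i)))" by (rule energy_add[OF sym])
    also have "\<dots> = energy A ystar (y i) - a * q + 1/2 * a^2 * d i"
      unfolding Ae by (simp add: q_def d_def matrix_vector_mult_scaleR power2_eq_square inner_commute)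
    also have "\<dots> = energy A ystar (y i) - 1/2 * q^2 / d i"
      using dn by (simp add: a_def aeq q_def field_simps power2_eq_square)
    finally have E: "energy A ystar (y i + a *\<^sub>R p i) = energy A ystar (y i) - 1/2 * q^2 / d i" .
    have "q = - \<gamma> (i - 1) * rr2 / a'" using K[of i] i a'nz
      by (simp add: q_def rr2_def a'_def field_simps)
    then have q2: "q^2 = (\<gamma> (i - 1) / a')^2 * rr2^2" by (simp add: power_divide power_mult_distrib)
    have n4: "(norm (r i))^4 = rr2^2"
      by (simp add: rr2_def power2_norm_eq_inner[symmetric] flip: power_mult)
    show "energy A ystar (y i + cd_a A r p i *\<^sub>R p i)
          = energy A ystar (y i)
            - 1/2 * (\<gamma> (i - 1) / cd_a A r p (i - 1))^2 * (norm (r i))^4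
                  / (p i \<bullet> (A *v p i))"
      using E q2 n4 by (simp add: a_def a'_def d_def)
  qed
  have C4: "\<forall>X. is_moore_penrose A X \<longrightarrow>
        (X - (\<Sum>i\<le>m. (1 / (p i \<bullet> (A *v p i))) *\<^sub>R outer_prod (p i) (p i))) *v r 0 = 0"
  proof (intro allI impI)
    fix X assume X: "is_moore_penrose A X"
    define w0 where "w0 = y (Suc m) - y 0"
    have r0w: "r 0 = A *v w0" using r0 final by (simp add: w0_def matrix_vector_mult_diff_distrib)
    have zex: "k \<le> m \<Longrightarrow> \<exists>z. p k = A *v z" for k
    proof (induction k rule: less_induct)
      case (less k)
      show ?case
      proof (cases "k = 0")
        case True then show ?thesis using p0 r0w by auto
      next
        case False
        show ?thesis
        proof (cases "k = 1")
          case True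
          obtain z where z: "p 0 = A *v z" using less True by auto
          have "p 1 = A *v (\<gamma> 0 *\<^sub>R p 0 - cd_sigma A p \<gamma> 0 *\<^sub>R z)"
            using p1 less True z by (simp add: matrix_vector_mult_diff_distrib matrix_vector_mult_scaleR)
          then show ?thesis using True by blast
        next
          case False
          then obtain k' where k: "k = Suc k'" "1 \<le> k'" "k' < m" using \<open>k \<noteq> 0\<close> less
            by (cases k) auto
          obtain z where z: "p k' = A *v z" using less k by auto
          have "k' - 1 < k" "k' - 1 \<le> m" using k by auto
          then obtain z' where z': "p (k' - 1) = A *v z'" using less(1)[of "k' - 1"] by blast
          have "p k = \<gamma> k' *\<^sub>R (A *v p k') - cd_sigma A p \<gamma> k' *\<^sub>R p k'
                    - cd_omega A p \<gamma> k' *\<^sub>R p (k' - 1)" using pstep k by simp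
          also have "\<dots> = A *v (\<gamma> k' *\<^sub>R p k' - cd_sigma A p \<gamma> k' *\<^sub>R z - cd_omega A p \<gamma> k' *\<^sub>R z')"
            using z z' by (simp add: matrix_vector_mult_diff_distrib matrix_vector_mult_scaleR)
          finally show ?thesis by blast
        qed
      qed
    qed
    have "\<forall>k. \<exists>z. k \<le> m \<longrightarrow> p k = A *v z" using zex by blast
    then obtain Z where Z: "\<And>k. k \<le> m \<Longrightarrow> p k = A *v Z k" by metis
    have ysum: "k \<le> Suc m \<Longrightarrow> y k = y 0 + (\<Sum>i<k. cd_a A r p i *\<^sub>R p i)" for k
    proof (induction k)
      case (Suc k)
      then have "y (Suc k) = y k + cd_a A r p k *\<^sub>R p k" using ystep by simp
      then show ?case using Suc by simp
    qed simp
    have w0s: "w0 = (\<Sum>i\<le>m. cd_a A r p i *\<^sub>R p i)"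
      using ysum[of "Suc m"] by (simp add: w0_def lessThan_Suc_atMost)
    also have "\<dots> = A *v (\<Sum>i\<le>m. cd_a A r p i *\<^sub>R Z i)"
      by (simp add: mat_mult_sum matrix_vector_mult_scaleR Z)
    finally have w0A: "w0 = A *v (\<Sum>i\<le>m. cd_a A r p i *\<^sub>R Z i)" .
    have Xr: "X *v r 0 = w0" unfolding r0w using penrose_fix[OF X sym] w0A by metis
    have "(\<Sum>i\<le>m. (1 / (p i \<bullet> (A *v p i))) *\<^sub>R outer_prod (p i) (p i)) *v r 0
          = (\<Sum>i\<le>m. cd_a A r p i *\<^sub>R p i)"
      unfolding sum_mat_mult
    proof (rule sum.cong)
      fix i assume "i \<in> {..m}"
      then have "r i \<bullet> p i = r 0 \<bullet> p i" using rp0[of i i] by simp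
      then show "((1 / (p i \<bullet> (A *v p i))) *\<^sub>R outer_prod (p i) (p i)) *v r 0 = cd_a A r p i *\<^sub>R p i"
        by (simp add: scaleR_matrix_vector_assoc[symmetric] outer_mult aeq d_def inner_commute)
    qed simp
    then show "(X - (\<Sum>i\<le>m. (1 / (p i \<bullet> (A *v p i))) *\<^sub>R outer_prod (p i) (p i))) *v r 0 = 0"
      using Xr w0s by (simp add: matrix_vector_mult_diff_rdistrib)
  qed
  show ?thesis using C1 C2 C3 C4 by blast
qed

end
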